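(* Let $\mathcal{A}$ be an alternative $W^{*}$-factor, $\mathcal{B}$ an alternative complex $\ast$-algebra, and $\Phi:\mathcal{A}\to\mathcal{B}$ a bijection preserving product $ab+ba^{*}$ (resp. $ab-ba^{*}$). Let $p_{1}\in\mathcal{A}$ be a projection with $p_{1}\neq 1_{\mathcal{A}}$, $p_{2}=1_{\mathcal{A}}-p_{1}$, and $\mathcal{A}_{ij}=p_{i}\mathcal{A}p_{j}$. Then for all $a_{11},b_{11}\in\mathcal{A}_{11}$ and $c_{22},d_{22}\in\mathcal{A}_{22}$: (i) $\Phi(a_{11}+b_{11})=\Phi(a_{11})+\Phi(b_{11})$ and (ii) $\Phi(c_{22}+d_{22})=\Phi(c_{22})+\Phi(d_{22})$.
   Context: An alternative $W^{*}$-factor is a prime alternative $C^{*}$-algebra (complete normed alternative complex $\ast$-algebra with $\|a^{*}a\|=\|a\|^{2}$) that is a dual Banach space; it is unital. A projection is a nonzero self-adjoint idempotent. $\mathcal{A}_{ij}$ are the Peirce components with respect to $p_{1}$. $\Phi$ preserves product $ab+ba^{*}$ (resp. $ab-ba^{*}$) if $\Phi(ab+ba^{*})=\Phi(a)\Phi(b)+\Phi(b)\Phi(a)^{*}$ (resp. $\Phi(ab-ba^{*})=\Phi(a)\Phi(b)-\Phi(b)\Phi(a)^{*}$) for all $a,b\in\mathcal{A}$. *)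

theory Defs
  imports "HOL-Analysis.Analysis"
begin

class complex_vector = real_vector +
  fixes scaleC :: "complex \<Rightarrow> 'a \<Rightarrow> 'a" (infixr \<open>*\<^sub>C\<close> 75)
  assumes scaleC_add_right: "c *\<^sub>C (x + y) = c *\<^sub>C x + c *\<^sub>C y"
    and scaleC_add_left: "(b + c) *\<^sub>C x = b *\<^sub>C x + c *\<^sub>C x"
    and scaleC_scaleC: "b *\<^sub>C (c *\<^sub>C x) = (b * c) *\<^sub>C x"
    and scaleC_one: "1 *\<^sub>C x = x"
    and scaleR_scaleC: "r *\<^sub>R x = (complex_of_real r) *\<^sub>C x"

class complex_normed_vector = complex_vector + real_normed_vector +
  assumes norm_scaleC: "norm (c *\<^sub>C x) = cmod c * norm x"

text \<open>An algebra structure on a complex vector space is given explicitly by a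
(not necessarily associative) multiplication mul and an involution star.\<close>

definition complex_bilinear :: "('a::complex_vector \<Rightarrow> 'a \<Rightarrow> 'a) \<Rightarrow> bool" where
  "complex_bilinear mul \<longleftrightarrow>
     (\<forall>x y z. mul (x + y) z = mul x z + mul y z) \<and>
     (\<forall>x y z. mul x (y + z) = mul x y + mul x z) \<and>
     (\<forall>c x y. mul (c *\<^sub>C x) y = c *\<^sub>C mul x y) \<and>
     (\<forall>c x y. mul x (c *\<^sub>C y) = c *\<^sub>C mul x y)"

definition alternative_law :: "('a \<Rightarrow> 'a \<Rightarrow> 'a) \<Rightarrow> bool" where
  "alternative_law mul \<longleftrightarrow>
     (\<forall>a b. mul (mul a a) b = mul a (mul a b)) \<and>
     (\<forall>a b. mul (mul b a) a = mul b (mul a a))"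

definition star_involution ::
  "('a::complex_vector \<Rightarrow> 'a \<Rightarrow> 'a) \<Rightarrow> ('a \<Rightarrow> 'a) \<Rightarrow> bool" where
  "star_involution mul star \<longleftrightarrow>
     (\<forall>x. star (star x) = x) \<and>
     (\<forall>x y. star (x + y) = star x + star y) \<and>
     (\<forall>c x. star (c *\<^sub>C x) = cnj c *\<^sub>C star x) \<and>
     (\<forall>x y. star (mul x y) = mul (star y) (star x))"

definition alt_star_algebra ::
  "('a::complex_vector \<Rightarrow> 'a \<Rightarrow> 'a) \<Rightarrow> ('a \<Rightarrow> 'a) \<Rightarrow> bool" where
  "alt_star_algebra mul star \<longleftrightarrow>
     complex_bilinear mul \<and> alternative_law mul \<and> star_involution mul star"

definition alt_C_star_algebra ::
  "('a::{complex_normed_vector,banach} \<Rightarrow> 'a \<Rightarrow> 'a) \<Rightarrow> ('a \<Rightarrow> 'a) \<Rightarrow> bool" where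
  "alt_C_star_algebra mul star \<longleftrightarrow>
     alt_star_algebra mul star \<and>
     (\<forall>x y. norm (mul x y) \<le> norm x * norm y) \<and>
     (\<forall>a. norm (mul (star a) a) = (norm a)\<^sup>2)"

definition alg_ideal :: "('a::complex_vector \<Rightarrow> 'a \<Rightarrow> 'a) \<Rightarrow> 'a set \<Rightarrow> bool" where
  "alg_ideal mul I \<longleftrightarrow>
     0 \<in> I \<and> (\<forall>x\<in>I. \<forall>y\<in>I. x + y \<in> I) \<and> (\<forall>c. \<forall>x\<in>I. c *\<^sub>C x \<in> I) \<and>
     (\<forall>x\<in>I. \<forall>a. mul a x \<in> I \<and> mul x a \<in> I)"

definition prime_algebra :: "('a::complex_vector \<Rightarrow> 'a \<Rightarrow> 'a) \<Rightarrow> bool" where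
  "prime_algebra mul \<longleftrightarrow>
     (\<forall>I J. alg_ideal mul I \<and> alg_ideal mul J \<and> (\<forall>x\<in>I. \<forall>y\<in>J. mul x y = 0)
        \<longrightarrow> I = {0} \<or> J = {0})"

definition bounded_complex_functional :: "('a::complex_normed_vector \<Rightarrow> complex) \<Rightarrow> bool" where
  "bounded_complex_functional f \<longleftrightarrow>
     (\<forall>x y. f (x + y) = f x + f y) \<and> (\<forall>c x. f (c *\<^sub>C x) = c * f x) \<and>
     (\<exists>K. \<forall>x. cmod (f x) \<le> K * norm x)"

text \<open>Any predual can be viewed
(via the canonical embedding) as a norm-closed complex subspace F of the dual of A;
A is then a dual space iff evaluation a \<mapsto> (f \<mapsto> f a) is an isometric
isomorphism of A onto the space of bounded complex-linear functionals on F.\<close>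
definition dual_banach_space :: "'a::{complex_normed_vector,banach} itself \<Rightarrow> bool" where
  "dual_banach_space _ \<longleftrightarrow>
     (\<exists>F :: ('a \<Rightarrow> complex) set.
        (\<forall>f\<in>F. bounded_complex_functional f) \<and>
        (\<lambda>_. 0) \<in> F \<and>
        (\<forall>f\<in>F. \<forall>g\<in>F. (\<lambda>x. f x + g x) \<in> F) \<and>
        (\<forall>c. \<forall>f\<in>F. (\<lambda>x. c * f x) \<in> F) \<and>
        (\<forall>h g. (\<forall>n. h n \<in> F) \<and> bounded_complex_functional g \<and>
               (\<lambda>n. onorm (\<lambda>x. h n x - g x)) \<longlonglongrightarrow> 0 \<longrightarrow> g \<in> F) \<and>
        (\<forall>a::'a. norm a = Sup {cmod (f a) | f. f \<in> F \<and> onorm f \<le> 1}) \<and>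
        (\<forall>\<phi> :: ('a \<Rightarrow> complex) \<Rightarrow> complex.
           (\<forall>f\<in>F. \<forall>g\<in>F. \<phi> (\<lambda>x. f x + g x) = \<phi> f + \<phi> g) \<and>
           (\<forall>c. \<forall>f\<in>F. \<phi> (\<lambda>x. c * f x) = c * \<phi> f) \<and>
           (\<exists>K. \<forall>f\<in>F. cmod (\<phi> f) \<le> K * onorm f)
           \<longrightarrow> (\<exists>a::'a. \<forall>f\<in>F. \<phi> f = f a)))"

definition alt_W_star_factor ::
  "('a::{complex_normed_vector,banach} \<Rightarrow> 'a \<Rightarrow> 'a) \<Rightarrow> ('a \<Rightarrow> 'a) \<Rightarrow> bool" where
  "alt_W_star_factor mul star \<longleftrightarrow>
     alt_C_star_algebra mul star \<and> prime_algebra mul \<and> dual_banach_space TYPE('a)"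

definition is_unit :: "('a \<Rightarrow> 'a \<Rightarrow> 'a) \<Rightarrow> 'a \<Rightarrow> bool" where
  "is_unit mul u \<longleftrightarrow> (\<forall>x. mul u x = x \<and> mul x u = x)"

definition projection :: "('a::zero \<Rightarrow> 'a \<Rightarrow> 'a) \<Rightarrow> ('a \<Rightarrow> 'a) \<Rightarrow> 'a \<Rightarrow> bool" where
  "projection mul star p \<longleftrightarrow> p \<noteq> 0 \<and> star p = p \<and> mul p p = p"

definition peirce :: "('a \<Rightarrow> 'a \<Rightarrow> 'a) \<Rightarrow> 'a \<Rightarrow> 'a \<Rightarrow> 'a set" where
  "peirce mul p q = {mul (mul p a) q | a. True}"

definition preserves_plus ::
  "('a::plus \<Rightarrow> 'a \<Rightarrow> 'a) \<Rightarrow> ('a \<Rightarrow> 'a) \<Rightarrow> ('b::plus \<Rightarrow> 'b \<Rightarrow> 'b) \<Rightarrow> ('b \<Rightarrow> 'b)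
   \<Rightarrow> ('a \<Rightarrow> 'b) \<Rightarrow> bool" where
  "preserves_plus mulA starA mulB starB \<Phi> \<longleftrightarrow>
     (\<forall>a b. \<Phi> (mulA a b + mulA b (starA a)) = mulB (\<Phi> a) (\<Phi> b) + mulB (\<Phi> b) (starB (\<Phi> a)))"

definition preserves_minus ::
  "('a::minus \<Rightarrow> 'a \<Rightarrow> 'a) \<Rightarrow> ('a \<Rightarrow> 'a) \<Rightarrow> ('b::minus \<Rightarrow> 'b \<Rightarrow> 'b) \<Rightarrow> ('b \<Rightarrow> 'b)
   \<Rightarrow> ('a \<Rightarrow> 'b) \<Rightarrow> bool" where
  "preserves_minus mulA starA mulB starB \<Phi> \<longleftrightarrow>
     (\<forall>a b. \<Phi> (mulA a b - mulA b (starA a)) = mulB (\<Phi> a) (\<Phi> b) - mulB (\<Phi> b) (starB (\<Phi> a)))"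

end

theory Submission
  imports Defs
begin

section \<open>complex vector basics\<close>

lemma scaleC_zero_right [simp]: "c *\<^sub>C (0::'a::complex_vector) = 0"
proof -
  have "c *\<^sub>C (0::'a) = c *\<^sub>C 0 + c *\<^sub>C 0" by (metis add.right_neutral scaleC_add_right)
  then show ?thesis by simp
qed

lemma scaleC_zero_left [simp]: "(0::complex) *\<^sub>C (x::'a::complex_vector) = 0"
proof -
  have "(0::complex) *\<^sub>C x = 0 *\<^sub>C x + 0 *\<^sub>C x" by (metis add.right_neutral scaleC_add_left)
  then show ?thesis by simp
qed

lemma scaleC_minus_right [simp]: "c *\<^sub>C (- (x::'a::complex_vector)) = - (c *\<^sub>C x)"
  by (metis add.right_inverse add_eq_0_iff scaleC_add_right scaleC_zero_right)

lemma scaleC_diff_right: "c *\<^sub>C ((x::'a::complex_vector) - y) = c *\<^sub>C x - c *\<^sub>C y"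
  by (metis diff_conv_add_uminus scaleC_add_right scaleC_minus_right)

lemma scaleC_minus_one [simp]: "(-1::complex) *\<^sub>C (x::'a::complex_vector) = - x"
  by (metis of_real_1 of_real_minus scaleR_minus1_left scaleR_scaleC)

lemma scaleC_cancel:
  assumes "c \<noteq> 0" "c *\<^sub>C (x::'a::complex_vector) = c *\<^sub>C y" shows "x = y"
  by (metis assms field_class.field_inverse scaleC_one scaleC_scaleC)

lemma scaleR_scaleC_comm: "r *\<^sub>R (c *\<^sub>C (x::'a::complex_vector)) = c *\<^sub>C (r *\<^sub>R x)"
  by (simp add: scaleR_scaleC scaleC_scaleC mult.commute)

section \<open>Alternative *-algebra with a projection\<close>

locale altstar =
  fixes mul :: "'a::complex_vector \<Rightarrow> 'a \<Rightarrow> 'a" and star :: "'a \<Rightarrow> 'a"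
    and one :: 'a and e :: 'a
  assumes A: "alt_star_algebra mul star" and U: "is_unit mul one"
    and Pe: "projection mul star e" and neq: "e \<noteq> one"
begin

lemma mul_add_left: "mul (x + y) z = mul x z + mul y z"
  using A unfolding alt_star_algebra_def complex_bilinear_def by blast
lemma mul_add_right: "mul x (y + z) = mul x y + mul x z"
  using A unfolding alt_star_algebra_def complex_bilinear_def by blast
lemma mul_scaleC_left: "mul (c *\<^sub>C x) y = c *\<^sub>C mul x y"
  using A unfolding alt_star_algebra_def complex_bilinear_def by blast
lemma mul_scaleC_right: "mul x (c *\<^sub>C y) = c *\<^sub>C mul x y"
  using A unfolding alt_star_algebra_def complex_bilinear_def by blast
lemma mul_zero_left [simp]: "mul 0 x = 0"
  by (metis add_cancel_left_left mul_add_left)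
lemma mul_zero_right [simp]: "mul x 0 = 0"
  by (metis add_cancel_left_left mul_add_right)
lemma mul_minus_left: "mul (- x) y = - mul x y"
  by (metis add_eq_0_iff mul_add_left mul_zero_left add.right_inverse)
lemma mul_minus_right: "mul x (- y) = - mul x y"
  by (metis add_eq_0_iff mul_add_right mul_zero_right add.right_inverse)
lemma mul_diff_left: "mul (x - y) z = mul x z - mul y z"
  by (metis diff_conv_add_uminus mul_add_left mul_minus_left)
lemma mul_diff_right: "mul x (y - z) = mul x y - mul x z"
  by (metis diff_conv_add_uminus mul_add_right mul_minus_right)
lemma mul_scaleR_left: "mul (r *\<^sub>R x) y = r *\<^sub>R mul x y"
  by (simp add: scaleR_scaleC mul_scaleC_left)
lemma mul_scaleR_right: "mul x (r *\<^sub>R y) = r *\<^sub>R mul x y"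
  by (simp add: scaleR_scaleC mul_scaleC_right)

lemmas mul_lin = mul_add_left mul_add_right mul_scaleC_left mul_scaleC_right
  mul_minus_left mul_minus_right mul_diff_left mul_diff_right mul_scaleR_left mul_scaleR_right

lemma alt_left: "mul (mul a a) b = mul a (mul a b)"
  using A unfolding alt_star_algebra_def alternative_law_def by blast
lemma alt_right: "mul (mul b a) a = mul b (mul a a)"
  using A unfolding alt_star_algebra_def alternative_law_def by blast

lemma star_star [simp]: "star (star x) = x"
  using A unfolding alt_star_algebra_def star_involution_def by blast
lemma star_add: "star (x + y) = star x + star y"
  using A unfolding alt_star_algebra_def star_involution_def by blast
lemma star_scaleC: "star (c *\<^sub>C x) = cnj c *\<^sub>C star x"
  using A unfolding alt_star_algebra_def star_involution_def by blast
lemma star_mul: "star (mul x y) = mul (star y) (star x)"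
  using A unfolding alt_star_algebra_def star_involution_def by blast
lemma star_zero [simp]: "star 0 = 0"
  by (metis add_cancel_left_left star_add)
lemma star_minus: "star (- x) = - star x"
  by (metis add_eq_0_iff star_add star_zero add.right_inverse)
lemma star_diff: "star (x - y) = star x - star y"
  by (metis diff_conv_add_uminus star_add star_minus)
lemma star_scaleR: "star (r *\<^sub>R x) = r *\<^sub>R star x"
  by (simp add: scaleR_scaleC star_scaleC)

lemma one_left [simp]: "mul one x = x" using U unfolding is_unit_def by blast
lemma one_right [simp]: "mul x one = x" using U unfolding is_unit_def by blast
lemma star_one [simp]: "star one = one"
proof -
  have "mul (star one) x = x" for x
    by (metis one_right star_mul star_star)
  then show ?thesis by (metis one_right)
qed

lemma e_star [simp]: "star e = e" using Pe unfolding projection_def by blast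
lemma e_idem [simp]: "mul e e = e" using Pe unfolding projection_def by blast

definition "assoc x y z = mul (mul x y) z - mul x (mul y z)"

lemma assoc_swap12: "assoc x y z = - assoc y x z"
proof -
  have "mul (mul (x+y) (x+y)) z = mul (x+y) (mul (x+y) z)" by (rule alt_left)
  then have "mul (mul x y) z + mul (mul y x) z = mul x (mul y z) + mul y (mul x z)"
    by (simp add: mul_lin alt_left algebra_simps)
  then show ?thesis unfolding assoc_def by (simp add: algebra_simps)
qed

lemma assoc_swap23: "assoc x y z = - assoc x z y"
proof -
  have "mul (mul x (y+z)) (y+z) = mul x (mul (y+z) (y+z))" by (rule alt_right)
  then have "mul (mul x y) z + mul (mul x z) y = mul x (mul y z) + mul x (mul z y)"
    by (simp add: mul_lin alt_right algebra_simps)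
  then show ?thesis unfolding assoc_def by (simp add: algebra_simps)
qed

lemma F1: "mul e (mul x y) = mul (mul e x) y + mul (mul x e) y - mul x (mul e y)"
  using assoc_swap12[of e x y] unfolding assoc_def by (simp add: algebra_simps)
lemma F2: "mul (mul x y) e = mul x (mul y e) - mul (mul x e) y + mul x (mul e y)"
  using assoc_swap23[of x y e] unfolding assoc_def by (simp add: algebra_simps)

lemma LL: "mul e (mul e x) = mul e x" by (metis alt_left e_idem)
lemma RR: "mul (mul x e) e = mul x e" by (metis alt_right e_idem)
lemma flex: "mul e (mul x e) = mul (mul e x) e"
proof -
  have "assoc e x e = 0" using assoc_swap23[of e x e] unfolding assoc_def by (simp add: LL)
  then show ?thesis unfolding assoc_def by simp
qed

definition "ev x a b \<longleftrightarrow> mul e x = a *\<^sub>R x \<and> mul x e = b *\<^sub>R x"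

lemma force_L: assumes "mul e z = r *\<^sub>R z" "r \<noteq> 0" "r \<noteq> 1" shows "z = 0"
proof -
  have "mul e (mul e z) = mul e z" by (rule LL)
  then have "r *\<^sub>R (r *\<^sub>R z) = r *\<^sub>R z" by (simp add: assms(1) mul_scaleR_right)
  then have "(r*r - r) *\<^sub>R z = 0" by (simp add: algebra_simps)
  moreover have "r*r - r \<noteq> 0" using assms(2,3)
    by (metis eq_iff_diff_eq_0 mult_cancel_right1)
  ultimately show ?thesis by simp
qed

lemma force_R: assumes "mul z e = r *\<^sub>R z" "r \<noteq> 0" "r \<noteq> 1" shows "z = 0"
proof -
  have "mul (mul z e) e = mul z e" by (rule RR)
  then have "r *\<^sub>R (r *\<^sub>R z) = r *\<^sub>R z" by (simp add: assms(1) mul_scaleR_left)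
  then have "(r*r - r) *\<^sub>R z = 0" by (simp add: algebra_simps)
  moreover have "r*r - r \<noteq> 0" using assms(2,3)
    by (metis eq_iff_diff_eq_0 mult_cancel_right1)
  ultimately show ?thesis by simp
qed

lemma ev_mul_raw:
  assumes "ev x a b" "ev y c d"
  shows "mul e (mul x y) = (a+b-c) *\<^sub>R mul x y \<and> mul (mul x y) e = (d-b+c) *\<^sub>R mul x y"
proof -
  have h: "mul e x = a *\<^sub>R x" "mul x e = b *\<^sub>R x" "mul e y = c *\<^sub>R y" "mul y e = d *\<^sub>R y"
    using assms unfolding ev_def by auto
  have 1: "mul e (mul x y) = (a+b-c) *\<^sub>R mul x y"
    unfolding F1[of x y] h by (simp add: mul_scaleR_left mul_scaleR_right algebra_simps)
  have 2: "mul (mul x y) e = (d-b+c) *\<^sub>R mul x y"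
    unfolding F2[of x y] h by (simp add: mul_scaleR_left mul_scaleR_right algebra_simps)
  show ?thesis using 1 2 by simp
qed

lemma ev_prod:
  assumes "ev x a b" "ev y c d"
  shows "(if (a+b-c = 0 \<or> a+b-c = 1) \<and> (d-b+c = 0 \<or> d-b+c = 1)
          then ev (mul x y) (a+b-c) (d-b+c) else mul x y = 0)"
proof (cases "(a+b-c = 0 \<or> a+b-c = 1) \<and> (d-b+c = 0 \<or> d-b+c = 1)")
  case True
  then show ?thesis using ev_mul_raw[OF assms] unfolding ev_def by simp
next
  case False
  then have "\<not> (a+b-c = 0 \<or> a+b-c = 1) \<or> \<not> (d-b+c = 0 \<or> d-b+c = 1)" by blast
  then have "mul x y = 0"
  proof
    assume "\<not> (a+b-c = 0 \<or> a+b-c = 1)"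
    then show ?thesis using force_L ev_mul_raw[OF assms] by blast
  next
    assume "\<not> (d-b+c = 0 \<or> d-b+c = 1)"
    then show ?thesis using force_R ev_mul_raw[OF assms] by blast
  qed
  then show ?thesis using False by (simp add: ev_def)
qed

lemma m11_11: "ev x 1 1 \<Longrightarrow> ev y 1 1 \<Longrightarrow> ev (mul x y) 1 1" using ev_prod[of x 1 1 y 1 1] by simp
lemma m11_12: "ev x 1 1 \<Longrightarrow> ev y 1 0 \<Longrightarrow> ev (mul x y) 1 0" using ev_prod[of x 1 1 y 1 0] by simp
lemma m11_21: "ev x 1 1 \<Longrightarrow> ev y 0 1 \<Longrightarrow> mul x y = 0" using ev_prod[of x 1 1 y 0 1] by simp
lemma m11_22: "ev x 1 1 \<Longrightarrow> ev y 0 0 \<Longrightarrow> mul x y = 0" using ev_prod[of x 1 1 y 0 0] by simp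
lemma m12_11: "ev x 1 0 \<Longrightarrow> ev y 1 1 \<Longrightarrow> mul x y = 0" using ev_prod[of x 1 0 y 1 1] by simp
lemma m12_12: "ev x 1 0 \<Longrightarrow> ev y 1 0 \<Longrightarrow> ev (mul x y) 0 1" using ev_prod[of x 1 0 y 1 0] by simp
lemma m12_21: "ev x 1 0 \<Longrightarrow> ev y 0 1 \<Longrightarrow> ev (mul x y) 1 1" using ev_prod[of x 1 0 y 0 1] by simp
lemma m12_22: "ev x 1 0 \<Longrightarrow> ev y 0 0 \<Longrightarrow> ev (mul x y) 1 0" using ev_prod[of x 1 0 y 0 0] by simp
lemma m21_11: "ev x 0 1 \<Longrightarrow> ev y 1 1 \<Longrightarrow> ev (mul x y) 0 1" using ev_prod[of x 0 1 y 1 1] by simp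
lemma m21_12: "ev x 0 1 \<Longrightarrow> ev y 1 0 \<Longrightarrow> ev (mul x y) 0 0" using ev_prod[of x 0 1 y 1 0] by simp
lemma m21_21: "ev x 0 1 \<Longrightarrow> ev y 0 1 \<Longrightarrow> ev (mul x y) 1 0" using ev_prod[of x 0 1 y 0 1] by simp
lemma m21_22: "ev x 0 1 \<Longrightarrow> ev y 0 0 \<Longrightarrow> mul x y = 0" using ev_prod[of x 0 1 y 0 0] by simp
lemma m22_11: "ev x 0 0 \<Longrightarrow> ev y 1 1 \<Longrightarrow> mul x y = 0" using ev_prod[of x 0 0 y 1 1] by simp
lemma m22_12: "ev x 0 0 \<Longrightarrow> ev y 1 0 \<Longrightarrow> mul x y = 0" using ev_prod[of x 0 0 y 1 0] by simp
lemma m22_21: "ev x 0 0 \<Longrightarrow> ev y 0 1 \<Longrightarrow> ev (mul x y) 0 1" using ev_prod[of x 0 0 y 0 1] by simp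
lemma m22_22: "ev x 0 0 \<Longrightarrow> ev y 0 0 \<Longrightarrow> ev (mul x y) 0 0" using ev_prod[of x 0 0 y 0 0] by simp

lemma ev_zero [simp]: "ev 0 a b" unfolding ev_def by simp
lemma ev_add: "ev x a b \<Longrightarrow> ev y a b \<Longrightarrow> ev (x + y) a b"
  unfolding ev_def by (simp add: mul_lin scaleR_add_right)
lemma ev_diff: "ev x a b \<Longrightarrow> ev y a b \<Longrightarrow> ev (x - y) a b"
  unfolding ev_def by (simp add: mul_lin scaleR_diff_right)
lemma ev_minus: "ev x a b \<Longrightarrow> ev (- x) a b"
  unfolding ev_def by (simp add: mul_lin)
lemma ev_scaleC: "ev x a b \<Longrightarrow> ev (c *\<^sub>C x) a b"
  unfolding ev_def by (simp add: mul_lin scaleR_scaleC_comm)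
lemma ev_scaleR: "ev x a b \<Longrightarrow> ev (r *\<^sub>R x) a b"
  unfolding ev_def by (simp add: mul_lin)
lemma ev_star: "ev x a b \<Longrightarrow> ev (star x) b a"
  unfolding ev_def by (metis e_star star_mul star_scaleR)

definition "P11 x = mul (mul e x) e"
definition "P12 x = mul e x - P11 x"
definition "P21 x = mul x e - P11 x"
definition "P22 x = x - mul e x - mul x e + P11 x"

lemma P_decomp: "x = P11 x + P12 x + P21 x + P22 x"
  unfolding P12_def P21_def P22_def by (simp add: algebra_simps)

lemma ev_P11: "ev (P11 x) 1 1"
  unfolding ev_def P11_def by (simp add: RR flex LL)
lemma ev_P12: "ev (P12 x) 1 0"
  unfolding ev_def P12_def P11_def by (simp add: mul_lin RR LL flex)
lemma ev_P21: "ev (P21 x) 0 1"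
  unfolding ev_def P21_def P11_def by (simp add: mul_lin RR LL flex)
lemma ev_P22: "ev (P22 x) 0 0"
  unfolding ev_def P22_def P11_def by (simp add: mul_lin RR LL flex)

lemma P_comp:
  assumes "ev w11 1 1" "ev w12 1 0" "ev w21 0 1" "ev w22 0 0"
    and "z = w11 + w12 + w21 + w22"
  shows "P11 z = w11 \<and> P12 z = w12 \<and> P21 z = w21 \<and> P22 z = w22"
proof -
  have L: "mul e z = w11 + w12" using assms unfolding ev_def by (simp add: mul_lin)
  have R: "mul z e = w11 + w21" using assms unfolding ev_def by (simp add: mul_lin)
  have 11: "P11 z = w11" unfolding P11_def L using assms unfolding ev_def by (simp add: mul_lin)
  show ?thesis using 11 L R assms(5) unfolding P12_def P21_def P22_def by (simp add: algebra_simps)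
qed

definition "f = one - e"
lemma f_left: "mul f x = x - mul e x" unfolding f_def by (simp add: mul_lin)
lemma f_right: "mul x f = x - mul x e" unfolding f_def by (simp add: mul_lin)
lemma f_star [simp]: "star f = f" unfolding f_def by (simp add: star_diff)
lemma ev_f: "ev f 0 0" unfolding ev_def f_def by (simp add: mul_lin)
lemma f_nz: "f \<noteq> 0" unfolding f_def using neq by simp

lemma P11_add: "P11 (x + y) = P11 x + P11 y" unfolding P11_def by (simp add: mul_lin)
lemma P11_scaleC: "P11 (c *\<^sub>C x) = c *\<^sub>C P11 x" unfolding P11_def by (simp add: mul_lin)
lemma P11_ev: "ev x a b \<Longrightarrow> P11 x = (a*b) *\<^sub>R x" unfolding P11_def ev_def by (simp add: mul_lin)

inductive_set UU :: "'a set" where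
  UU0: "0 \<in> UU"
| UUgen: "ev c 1 0 \<Longrightarrow> ev d 0 1 \<Longrightarrow> mul c d \<in> UU"
| UUadd: "u \<in> UU \<Longrightarrow> v \<in> UU \<Longrightarrow> u + v \<in> UU"
| UUsc: "u \<in> UU \<Longrightarrow> k *\<^sub>C u \<in> UU"

lemma assoc_zero_helper:
  assumes "ev y 1 1" "ev c 1 0" "ev d 0 1"
  shows "mul y (mul c d) = mul (mul y c) d" "mul (mul c d) y = mul c (mul d y)"
proof -
  have cy: "mul c y = 0" by (rule m12_11[OF assms(2,1)])
  have yd: "mul y d = 0" by (rule m11_21[OF assms(1,3)])
  have "assoc c y d = 0" unfolding assoc_def cy yd by simp
  then have "assoc y c d = 0" "assoc c d y = 0" using assoc_swap12[of y c d] assoc_swap23[of c d y] by simp_all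
  then show "mul y (mul c d) = mul (mul y c) d" "mul (mul c d) y = mul c (mul d y)"
    unfolding assoc_def by simp_all
qed

lemma UU_ev: "u \<in> UU \<Longrightarrow> ev u 1 1"
  by (induction rule: UU.induct) (auto intro: m12_21 ev_add ev_scaleC)

lemma UU_mul: "u \<in> UU \<Longrightarrow> ev y 1 1 \<Longrightarrow> mul y u \<in> UU \<and> mul u y \<in> UU"
proof (induction rule: UU.induct)
  case UU0 then show ?case by (simp add: UU.UU0)
next
  case (UUgen c d)
  then show ?case using assoc_zero_helper[OF UUgen(3,1,2)]
    by (metis UU.UUgen m11_12 m21_11)
next
  case (UUadd u v) then show ?case by (simp add: mul_lin UU.UUadd)
next
  case (UUsc u k) then show ?case by (simp add: mul_lin UU.UUsc)
qed

lemma UU_ann: assumes x: "ev x 1 1" and hx: "\<forall>c. ev c 1 0 \<longrightarrow> mul x c = 0"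
  shows "u \<in> UU \<Longrightarrow> mul x u = 0"
proof (induction rule: UU.induct)
  case UU0 then show ?case by simp
next
  case (UUgen c d)
  have "mul x (mul c d) = mul (mul x c) d" using assoc_zero_helper[OF x UUgen] by simp
  then show ?case using hx UUgen by simp
next
  case (UUadd u v) then show ?case by (simp add: mul_lin)
next
  case (UUsc u k) then show ?case by (simp add: mul_lin)
qed

lemma P11_prod_UU:
  assumes "ev x a b" "ev y c d" "a \<in> {0,1}" "b \<in> {0,1}" "c \<in> {0,1}" "d \<in> {0,1}"
    and "a = 1 \<and> b = 1 \<and> c = 1 \<and> d = 1 \<longrightarrow> x \<in> UU \<or> y \<in> UU"
  shows "P11 (mul x y) \<in> UU"
proof (cases "(a+b-c = 0 \<or> a+b-c = 1) \<and> (d-b+c = 0 \<or> d-b+c = 1)")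
  case True
  then have ev: "ev (mul x y) (a+b-c) (d-b+c)" using ev_prod[OF assms(1,2)] by simp
  have P: "P11 (mul x y) = ((a+b-c)*(d-b+c)) *\<^sub>R mul x y" by (rule P11_ev[OF ev])
  show ?thesis
  proof (cases "a+b-c = 1 \<and> d-b+c = 1")
    case True
    then have "(a = 1 \<and> b = 1 \<and> c = 1 \<and> d = 1) \<or> (a = 1 \<and> b = 0 \<and> c = 0 \<and> d = 1)"
      using assms(3-6) by auto
    then show ?thesis
    proof
      assume h: "a = 1 \<and> b = 1 \<and> c = 1 \<and> d = 1"
      then have "x \<in> UU \<or> y \<in> UU" using assms(7) by blast
      then have "mul x y \<in> UU" using UU_mul assms(1,2) h by blast
      then show ?thesis using P True by simp
    next
      assume h: "a = 1 \<and> b = 0 \<and> c = 0 \<and> d = 1"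
      then have "mul x y \<in> UU" using UUgen assms(1,2) by simp
      then show ?thesis using P True by simp
    qed
  next
    case False
    then have "(a+b-c)*(d-b+c) = 0" using True by auto
    then show ?thesis using P by (metis UU0 scale_zero_left)
  qed
next
  case False
  then have "mul x y = 0" using ev_prod[OF assms(1,2)] by simp
  then show ?thesis by (simp add: P11_def UU0)
qed

definition "EE = {z. P11 z \<in> UU}"

lemma P11_sum4: "P11 (w1 + w2 + w3 + w4) = P11 w1 + P11 w2 + P11 w3 + P11 w4"
  by (simp add: P11_add)

lemma EE_mul: assumes "z \<in> EE" shows "mul a z \<in> EE \<and> mul z a \<in> EE"
proof -
  have z11: "P11 z \<in> UU" using assms unfolding EE_def by simp
  have "P11 (mul (P11 a) (P11 z)) \<in> UU" using P11_prod_UU[OF ev_P11[of a] ev_P11[of z]] z11 by simp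
  moreover
  have "P11 (mul (P11 a) (P12 z)) \<in> UU" using P11_prod_UU[OF ev_P11[of a] ev_P12[of z]] z11 by simp
  moreover
  have "P11 (mul (P11 a) (P21 z)) \<in> UU" using P11_prod_UU[OF ev_P11[of a] ev_P21[of z]] z11 by simp
  moreover
  have "P11 (mul (P11 a) (P22 z)) \<in> UU" using P11_prod_UU[OF ev_P11[of a] ev_P22[of z]] z11 by simp
  moreover
  have "P11 (mul (P12 a) (P11 z)) \<in> UU" using P11_prod_UU[OF ev_P12[of a] ev_P11[of z]] z11 by simp
  moreover
  have "P11 (mul (P12 a) (P12 z)) \<in> UU" using P11_prod_UU[OF ev_P12[of a] ev_P12[of z]] z11 by simp
  moreover
  have "P11 (mul (P12 a) (P21 z)) \<in> UU" using P11_prod_UU[OF ev_P12[of a] ev_P21[of z]] z11 by simp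
  moreover
  have "P11 (mul (P12 a) (P22 z)) \<in> UU" using P11_prod_UU[OF ev_P12[of a] ev_P22[of z]] z11 by simp
  moreover
  have "P11 (mul (P21 a) (P11 z)) \<in> UU" using P11_prod_UU[OF ev_P21[of a] ev_P11[of z]] z11 by simp
  moreover
  have "P11 (mul (P21 a) (P12 z)) \<in> UU" using P11_prod_UU[OF ev_P21[of a] ev_P12[of z]] z11 by simp
  moreover
  have "P11 (mul (P21 a) (P21 z)) \<in> UU" using P11_prod_UU[OF ev_P21[of a] ev_P21[of z]] z11 by simp
  moreover
  have "P11 (mul (P21 a) (P22 z)) \<in> UU" using P11_prod_UU[OF ev_P21[of a] ev_P22[of z]] z11 by simp
  moreover
  have "P11 (mul (P22 a) (P11 z)) \<in> UU" using P11_prod_UU[OF ev_P22[of a] ev_P11[of z]] z11 by simp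
  moreover
  have "P11 (mul (P22 a) (P12 z)) \<in> UU" using P11_prod_UU[OF ev_P22[of a] ev_P12[of z]] z11 by simp
  moreover
  have "P11 (mul (P22 a) (P21 z)) \<in> UU" using P11_prod_UU[OF ev_P22[of a] ev_P21[of z]] z11 by simp
  moreover
  have "P11 (mul (P22 a) (P22 z)) \<in> UU" using P11_prod_UU[OF ev_P22[of a] ev_P22[of z]] z11 by simp
  moreover
  have "P11 (mul (P11 z) (P11 a)) \<in> UU" using P11_prod_UU[OF ev_P11[of z] ev_P11[of a]] z11 by simp
  moreover
  have "P11 (mul (P12 z) (P11 a)) \<in> UU" using P11_prod_UU[OF ev_P12[of z] ev_P11[of a]] z11 by simp
  moreover
  have "P11 (mul (P21 z) (P11 a)) \<in> UU" using P11_prod_UU[OF ev_P21[of z] ev_P11[of a]] z11 by simp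
  moreover
  have "P11 (mul (P22 z) (P11 a)) \<in> UU" using P11_prod_UU[OF ev_P22[of z] ev_P11[of a]] z11 by simp
  moreover
  have "P11 (mul (P11 z) (P12 a)) \<in> UU" using P11_prod_UU[OF ev_P11[of z] ev_P12[of a]] z11 by simp
  moreover
  have "P11 (mul (P12 z) (P12 a)) \<in> UU" using P11_prod_UU[OF ev_P12[of z] ev_P12[of a]] z11 by simp
  moreover
  have "P11 (mul (P21 z) (P12 a)) \<in> UU" using P11_prod_UU[OF ev_P21[of z] ev_P12[of a]] z11 by simp
  moreover
  have "P11 (mul (P22 z) (P12 a)) \<in> UU" using P11_prod_UU[OF ev_P22[of z] ev_P12[of a]] z11 by simp
  moreover
  have "P11 (mul (P11 z) (P21 a)) \<in> UU" using P11_prod_UU[OF ev_P11[of z] ev_P21[of a]] z11 by simp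
  moreover
  have "P11 (mul (P12 z) (P21 a)) \<in> UU" using P11_prod_UU[OF ev_P12[of z] ev_P21[of a]] z11 by simp
  moreover
  have "P11 (mul (P21 z) (P21 a)) \<in> UU" using P11_prod_UU[OF ev_P21[of z] ev_P21[of a]] z11 by simp
  moreover
  have "P11 (mul (P22 z) (P21 a)) \<in> UU" using P11_prod_UU[OF ev_P22[of z] ev_P21[of a]] z11 by simp
  moreover
  have "P11 (mul (P11 z) (P22 a)) \<in> UU" using P11_prod_UU[OF ev_P11[of z] ev_P22[of a]] z11 by simp
  moreover
  have "P11 (mul (P12 z) (P22 a)) \<in> UU" using P11_prod_UU[OF ev_P12[of z] ev_P22[of a]] z11 by simp
  moreover
  have "P11 (mul (P21 z) (P22 a)) \<in> UU" using P11_prod_UU[OF ev_P21[of z] ev_P22[of a]] z11 by simp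
  moreover
  have "P11 (mul (P22 z) (P22 a)) \<in> UU" using P11_prod_UU[OF ev_P22[of z] ev_P22[of a]] z11 by simp
  ultimately show ?thesis unfolding EE_def mem_Collect_eq
    apply (subst (1 2) P_decomp[of a])
    apply (subst (1 2) P_decomp[of z])
    apply (simp only: mul_add_left mul_add_right P11_add)
    apply (intro conjI UUadd; assumption)
    done
qed

lemma prime_lemma:
  assumes pr: "prime_algebra mul" and x: "ev x 1 1" and hx: "\<forall>c. ev c 1 0 \<longrightarrow> mul x c = 0"
  shows "x = 0"
proof -
  define M where "M = {w. \<forall>z\<in>EE. mul w z = 0}"
  have idE: "alg_ideal mul EE"
    unfolding alg_ideal_def
  proof (intro conjI ballI allI)
    show "0 \<in> EE" unfolding EE_def P11_def by (simp add: UU0)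
    show "x + y \<in> EE" if "x \<in> EE" "y \<in> EE" for x y
      using that unfolding EE_def by (simp add: P11_add UUadd)
    show "c *\<^sub>C x \<in> EE" if "x \<in> EE" for c x
      using that unfolding EE_def by (simp add: P11_scaleC UUsc)
    show "mul a x \<in> EE" if "x \<in> EE" for a x using EE_mul that by blast
    show "mul x a \<in> EE" if "x \<in> EE" for a x using EE_mul that by blast
  qed
  have key: "mul a w \<in> M \<and> mul w a \<in> M" if w: "w \<in> M" for w a
  proof -
    have "mul (mul a w) z = 0 \<and> mul (mul w a) z = 0" if z: "z \<in> EE" for z
    proof -
      have wz: "mul w z = 0" using w z unfolding M_def by simp
      have wza: "mul w (mul z a) = 0" "mul w (mul a z) = 0" using w EE_mul[OF z] unfolding M_def by auto
      have 1: "assoc w a z = 0"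
        using assoc_swap23[of w a z] wz wza unfolding assoc_def by simp
      have 2: "assoc a w z = 0" using assoc_swap12[of a w z] 1 by simp
      show ?thesis using 1 2 wz wza unfolding assoc_def by simp
    qed
    then show ?thesis unfolding M_def by auto
  qed
  have idM: "alg_ideal mul M"
    unfolding alg_ideal_def
  proof (intro conjI ballI allI)
    show "0 \<in> M" unfolding M_def by simp
    show "w + v \<in> M" if "w \<in> M" "v \<in> M" for w v using that unfolding M_def by (simp add: mul_lin)
    show "c *\<^sub>C w \<in> M" if "w \<in> M" for c w using that unfolding M_def by (simp add: mul_lin)
    show "mul a w \<in> M" if "w \<in> M" for a w using key that by blast
    show "mul w a \<in> M" if "w \<in> M" for a w using key that by blast
  qed
  have "\<forall>w\<in>M. \<forall>z\<in>EE. mul w z = 0" unfolding M_def by simp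
  then have "M = {0} \<or> EE = {0}" using pr idM idE unfolding prime_algebra_def by blast
  moreover have "f \<in> EE" unfolding EE_def using P11_ev[OF ev_f] by (simp add: UU0)
  ultimately have M0: "M = {0}" using f_nz by auto
  have "x \<in> M" unfolding M_def
  proof (intro CollectI ballI)
    fix z assume z: "z \<in> EE"
    have "mul x z = mul x (P11 z) + mul x (P12 z) + mul x (P21 z) + mul x (P22 z)"
      by (subst P_decomp[of z]) (simp add: mul_lin)
    also have "\<dots> = 0"
      using UU_ann[OF x hx] z hx m11_21[OF x ev_P21] m11_22[OF x ev_P22] ev_P12
      unfolding EE_def by simp
    finally show "mul x z = 0" .
  qed
  then show ?thesis using M0 by simp
qed

lemma double_zero_vec: "(x::'a) + x = 0 \<Longrightarrow> x = 0"
proof -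
  assume "x + x = 0"
  then have "(2::real) *\<^sub>R x = 0" by (simp add: scaleR_2)
  then show ?thesis by simp
qed

definition "V q z = mul q z + mul z q"
lemma V_lin: "V q (x - y - z) = V q x - V q y - V q z" unfolding V_def by (simp add: mul_lin algebra_simps)
lemma V_f: "V f z = (z + z) - V e z" unfolding V_def by (simp add: f_left f_right algebra_simps)
lemma V_ef: "V (e - f) z = V e z + V e z - (z + z)"
  unfolding V_def by (simp add: mul_lin f_left f_right algebra_simps)
lemma star_ef [simp]: "star (e - f) = e - f" by (simp add: star_diff)

lemma V_e_ev: "ev x a b \<Longrightarrow> V e x = (a + b) *\<^sub>R x" unfolding V_def ev_def by (simp add: scaleR_add_left)


lemma A11_char: assumes "t + t = mul e t + mul t e" shows "ev t 1 1"
proof -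
  have 1: "mul e t + mul e t = mul e t + mul e (mul t e)"
    using arg_cong[OF assms, of "mul e"] by (simp add: mul_lin LL)
  have 2: "mul t e + mul t e = mul (mul e t) e + mul t e"
    using arg_cong[OF assms, of "\<lambda>x. mul x e"] by (simp add: mul_lin RR)
  have a: "mul e t = mul (mul e t) e" using 1 flex[of t] by (metis add_left_cancel)
  have b: "mul t e = mul (mul e t) e" using 2 by (metis add_right_cancel)
  have "t + t = mul e t + mul e t" using assms a b by metis
  then have "(t - mul e t) + (t - mul e t) = 0" by (metis add_diff_add diff_self)
  then have "t = mul e t" using double_zero_vec by (metis eq_iff_diff_eq_0)
  then show ?thesis unfolding ev_def using a b by (metis scaleR_one)
qed

lemma L3_alg:
  assumes h1: "mul e D + mul D e = D"
    and h2: "mul D e + s *\<^sub>C star (mul D e) = 0"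
    and h3: "(D - mul D e) + s *\<^sub>C star (D - mul D e) = 0"
  shows "D = 0"
proof -
  define W where "W y = mul y e - mul e (mul y e)" for y
  define W' where "W' y = mul e y - mul e (mul y e)" for y
  have Wlin: "W (x + s *\<^sub>C y) = W x + s *\<^sub>C W y" for x y unfolding W_def by (simp add: mul_lin algebra_simps scaleC_add_right scaleC_diff_right)
  have W'lin: "W' (x + s *\<^sub>C y) = W' x + s *\<^sub>C W' y" for x y unfolding W'_def by (simp add: mul_lin algebra_simps scaleC_add_right scaleC_diff_right)
  have W0: "W (star (mul D e)) = 0" unfolding W_def star_mul by (simp add: flex LL)
  have a0: "W (mul D e + s *\<^sub>C star (mul D e)) = 0" using h2 unfolding W_def by simp
  have a: "mul D e = mul e (mul D e)"
    using a0 unfolding Wlin W0 by (simp add: W_def RR)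
  have W'0: "W' (star (D - mul D e)) = 0" unfolding W'_def star_diff star_mul
    by (simp add: mul_lin flex LL)
  have b0: "W' ((D - mul D e) + s *\<^sub>C star (D - mul D e)) = 0" using h3 unfolding W'_def by simp
  have b: "mul e D = mul e (mul D e)"
    using b0 unfolding W'lin W'0 by (simp add: W'_def mul_lin RR)
  have p: "mul e (mul D e) = mul (mul e D) e" by (rule flex)
  have eD: "mul e D = P11 D" unfolding P11_def using b p by metis
  have De: "mul D e = P11 D" unfolding P11_def using a p by metis
  have DD: "D = P11 D + P11 D" using h1 eD De by metis
  have PP: "P11 (P11 D) = P11 D" using P11_ev[OF ev_P11[of D]] by simp
  have "P11 D = P11 D + P11 D"
    using arg_cong[OF DD, of P11] unfolding P11_add PP .
  then have "P11 D = 0" by simp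
  then show ?thesis using DD by simp
qed

lemma P22_ev: "ev x a b \<Longrightarrow> P22 x = ((1-a)*(1-b)) *\<^sub>R x"
  unfolding P22_def using P11_ev[of x a b] unfolding ev_def by (simp add: algebra_simps)
lemma ev_Ve_minus: "P11 x = 0 \<Longrightarrow> ev (V e x - x) 0 0"
  unfolding ev_def V_def P11_def by (simp add: mul_lin LL RR flex)
lemma Ve_minus_P22: "P22 x = 0 \<Longrightarrow> V e x - x = P11 x"
  unfolding V_def P22_def by (simp add: algebra_simps)

end

locale presv = altstar mul star one e
  for mul :: "'a::complex_vector \<Rightarrow> 'a \<Rightarrow> 'a" and star one e +
  fixes mulB :: "'b::complex_vector \<Rightarrow> 'b \<Rightarrow> 'b" and starB :: "'b \<Rightarrow> 'b"
    and Phi :: "'a \<Rightarrow> 'b" and sg :: complex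
  assumes B: "alt_star_algebra mulB starB" and bijP: "bij Phi" and sg: "sg = 1 \<or> sg = -1"
    and pres: "\<And>x y. Phi (mul x y + sg *\<^sub>C mul y (star x))
                 = mulB (Phi x) (Phi y) + sg *\<^sub>C mulB (Phi y) (starB (Phi x))"
begin

definition "PA x y = mul x y + sg *\<^sub>C mul y (star x)"
definition "PB u v = mulB u v + sg *\<^sub>C mulB v (starB u)"

lemma presPA: "Phi (PA x y) = PB (Phi x) (Phi y)" unfolding PA_def PB_def by (rule pres)

lemma mulB_add_left: "mulB (x + y) z = mulB x z + mulB y z"
  using B unfolding alt_star_algebra_def complex_bilinear_def by blast
lemma mulB_add_right: "mulB x (y + z) = mulB x y + mulB x z"
  using B unfolding alt_star_algebra_def complex_bilinear_def by blast
lemma starB_add: "starB (x + y) = starB x + starB y"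
  using B unfolding alt_star_algebra_def star_involution_def by blast
lemma mulB_zero_left [simp]: "mulB 0 x = 0"
  by (metis add_cancel_left_left mulB_add_left)
lemma mulB_zero_right [simp]: "mulB x 0 = 0"
  by (metis add_cancel_left_left mulB_add_right)
lemma starB_zero [simp]: "starB 0 = 0"
  by (metis add_cancel_left_left starB_add)

lemma PB_add_left: "PB (u + v) w = PB u w + PB v w"
  unfolding PB_def by (simp add: mulB_add_left mulB_add_right starB_add scaleC_add_right algebra_simps)
lemma PB_add_right: "PB w (u + v) = PB w u + PB w v"
  unfolding PB_def by (simp add: mulB_add_left mulB_add_right starB_add scaleC_add_right algebra_simps)
lemma PB_zero_left [simp]: "PB 0 v = 0" unfolding PB_def by simp
lemma PB_zero_right [simp]: "PB v 0 = 0" unfolding PB_def by simp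

lemma PA_zero_left [simp]: "PA 0 v = 0" unfolding PA_def by simp
lemma PA_lin_left: "PA (x - y - z) w = PA x w - PA y w - PA z w"
  unfolding PA_def by (simp add: mul_lin star_diff star_add scaleC_diff_right scaleC_add_right algebra_simps)

lemma inj_Phi: "Phi x = Phi y \<Longrightarrow> x = y" using bijP by (meson bij_def injD)
lemma surj_Phi: "\<exists>t. Phi t = v" using bijP by (metis bij_def surjD)

lemma Phi0 [simp]: "Phi 0 = 0"
proof -
  obtain z where z: "Phi z = 0" using surj_Phi by blast
  have "Phi 0 = PB (Phi 0) (Phi z)" using presPA[of 0 z] by simp
  then show ?thesis using z by simp
qed

lemma Phi_eq0: "Phi x = 0 \<Longrightarrow> x = 0" using inj_Phi[of x 0] by simp

definition "kap = (if sg = 1 then 1 else \<i>)"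
lemma kap_nz: "kap \<noteq> 0" unfolding kap_def by simp
lemma kap_sg: "sg * cnj kap = kap" using sg unfolding kap_def by auto

lemma PA_test: assumes "star q = q" shows "PA (kap *\<^sub>C q) x = kap *\<^sub>C V q x"
  unfolding PA_def V_def using assms
  by (simp add: mul_lin star_scaleC scaleC_scaleC kap_sg scaleC_add_right)

lemma transfer:
  assumes "Phi t = Phi a + Phi b"
  shows "Phi (PA y t) = Phi (PA y a) + Phi (PA y b)" "Phi (PA t y) = Phi (PA a y) + Phi (PA b y)"
  using assms by (simp_all add: presPA PB_add_left PB_add_right)

lemma testD:
  assumes "Phi t = Phi a + Phi b" "star q = q"
    and "Phi (kap *\<^sub>C V q a) + Phi (kap *\<^sub>C V q b) = Phi (kap *\<^sub>C V q a + kap *\<^sub>C V q b)"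
  shows "V q (t - a - b) = 0"
proof -
  have "Phi (kap *\<^sub>C V q t) = Phi (kap *\<^sub>C V q a + kap *\<^sub>C V q b)"
    using transfer(1)[OF assms(1), of "kap *\<^sub>C q"] assms(3) unfolding PA_test[OF assms(2)] by simp
  then have "kap *\<^sub>C V q t = kap *\<^sub>C (V q a + V q b)" using inj_Phi scaleC_add_right by metis
  then have "V q t = V q a + V q b" using scaleC_cancel kap_nz by blast
  then show ?thesis unfolding V_lin by simp
qed

lemma ev_zeroV: "ev x 0 0 \<Longrightarrow> V e x = 0" using V_e_ev[of x 0 0] by simp

lemma L1: assumes x: "ev x 1 1" and y: "ev y 0 0" shows "Phi (x + y) = Phi x + Phi y"
proof -
  obtain t where t: "Phi t = Phi x + Phi y" using surj_Phi by blast
  have Vex: "V e x = x + x" using V_e_ev[OF x] by (simp add: scaleR_2)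
  have Vey: "V e y = 0" using V_e_ev[OF y] by simp
  have Vfx: "V f x = 0" using Vex by (simp add: V_f)
  have Vfy: "V f y = y + y" using Vey by (simp add: V_f)
  have 1: "V e (t - x - y) = 0" by (rule testD[OF t e_star]) (simp add: Vey)
  have 2: "V f (t - x - y) = 0" by (rule testD[OF t f_star]) (simp add: Vfx)
  have "(t - x - y) + (t - x - y) = 0" using 1 2 unfolding V_f by simp
  then have "t = x + y" using double_zero_vec by (metis diff_diff_eq eq_iff_diff_eq_0)
  then show ?thesis using t by simp
qed


lemma L2a: assumes x: "P11 x = 0" and d: "ev d 1 1" shows "Phi (x + d) = Phi x + Phi d"
proof -
  obtain t where t: "Phi t = Phi x + Phi d" using surj_Phi by blast
  have Ved: "V e d = d + d" using V_e_ev[OF d] by (simp add: scaleR_2)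
  have Vfd: "V f d = 0" using Ved by (simp add: V_f)
  have 1: "V f (t - x - d) = 0" by (rule testD[OF t f_star]) (simp add: Vfd)
  have evx: "ev (kap *\<^sub>C V (e - f) x) 0 0" unfolding V_ef
    using ev_Ve_minus[OF x] by (metis ev_add ev_scaleC add_diff_add add_diff_eq diff_add_eq)
  have evd: "ev (kap *\<^sub>C V (e - f) d) 1 1" unfolding V_ef Ved using d by (simp add: ev_scaleC ev_add)
  have 2: "V (e - f) (t - x - d) = 0"
    by (rule testD[OF t star_ef]) (metis L1[OF evd evx] add.commute)
  have "(t - x - d) + (t - x - d) = 0" using 1 2 unfolding V_f V_ef by (simp add: algebra_simps)
  then have "t = x + d" using double_zero_vec by (metis diff_diff_eq eq_iff_diff_eq_0)
  then show ?thesis using t by simp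
qed

lemma L2b: assumes x: "P22 x = 0" and d: "ev d 0 0" shows "Phi (x + d) = Phi x + Phi d"
proof -
  obtain t where t: "Phi t = Phi x + Phi d" using surj_Phi by blast
  have Ved: "V e d = 0" using V_e_ev[OF d] by simp
  have 1: "V e (t - x - d) = 0" by (rule testD[OF t e_star]) (simp add: Ved)
  have evx: "ev (kap *\<^sub>C V (e - f) x) 1 1" unfolding V_ef
    using Ve_minus_P22[OF x] ev_P11[of x] by (metis ev_add ev_scaleC add_diff_add add_diff_eq diff_add_eq)
  have evd: "ev (kap *\<^sub>C V (e - f) d) 0 0" unfolding V_ef Ved using d by (simp add: ev_scaleC ev_add ev_diff ev_minus)
  have 2: "V (e - f) (t - x - d) = 0"
    by (rule testD[OF t star_ef]) (metis L1[OF evx evd])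
  have "(t - x - d) + (t - x - d) = 0" using 1 2 unfolding V_ef by (simp add: algebra_simps)
  then have "t = x + d" using double_zero_vec by (metis diff_diff_eq eq_iff_diff_eq_0)
  then show ?thesis using t by simp
qed

lemma PA_e: "PA z e = mul z e + sg *\<^sub>C star (mul z e)"
  unfolding PA_def by (simp add: star_mul)
lemma PA_f: "PA z f = (z - mul z e) + sg *\<^sub>C star (z - mul z e)"
  unfolding PA_def by (simp add: star_mul f_right f_left star_diff)

lemma L3: assumes u: "ev u 1 0" and v: "ev v 0 1" shows "Phi (u + v) = Phi u + Phi v"
proof -
  obtain t where t: "Phi t = Phi u + Phi v" using surj_Phi by blast
  have Veu: "V e u = u" using V_e_ev[OF u] by simp
  have Vev: "V e v = v" using V_e_ev[OF v] by simp
  have 1: "V (e - f) (t - u - v) = 0" by (rule testD[OF t star_ef]) (simp add: V_ef Veu Vev)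
  have h1: "mul e (t - u - v) + mul (t - u - v) e = t - u - v"
  proof -
    have "V e (t - u - v) + V e (t - u - v) - ((t - u - v) + (t - u - v)) = 0" using 1 unfolding V_ef .
    then have "(V e (t - u - v) - (t - u - v)) + (V e (t - u - v) - (t - u - v)) = 0" by (simp add: algebra_simps)
    then have "V e (t - u - v) - (t - u - v) = 0" by (rule double_zero_vec)
    then show ?thesis unfolding V_def by simp
  qed
  have ue: "mul u e = 0" using u unfolding ev_def by simp
  have vf: "v - mul v e = 0" using v unfolding ev_def by simp
  have PAue: "PA u e = 0" unfolding PA_e ue by simp
  have PAvf: "PA v f = 0" unfolding PA_f vf by simp
  have "Phi (PA t e) = Phi (PA v e)" using transfer(2)[OF t, of e] PAue by simp
  then have "PA t e = PA v e" by (rule inj_Phi)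
  then have "PA (t - u - v) e = 0" unfolding PA_lin_left PAue by simp
  then have h2: "mul (t - u - v) e + sg *\<^sub>C star (mul (t - u - v) e) = 0" unfolding PA_e .
  have "Phi (PA t f) = Phi (PA u f)" using transfer(2)[OF t, of f] PAvf by simp
  then have "PA t f = PA u f" by (rule inj_Phi)
  then have "PA (t - u - v) f = 0" unfolding PA_lin_left PAvf by simp
  then have h3: "((t - u - v) - mul (t - u - v) e) + sg *\<^sub>C star ((t - u - v) - mul (t - u - v) e) = 0"
    unfolding PA_f .
  have "t - u - v = 0" by (rule L3_alg[OF h1 h2 h3])
  then show ?thesis using t by (simp add: algebra_simps)
qed

lemma Dec: "Phi z = Phi (P11 z) + Phi (P12 z) + Phi (P21 z) + Phi (P22 z)"
proof -
  have a: "P11 (P12 z + P21 z + P22 z) = 0"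
    using P11_ev[OF ev_P12[of z]] P11_ev[OF ev_P21[of z]] P11_ev[OF ev_P22[of z]] by (simp add: P11_add)
  have "Phi z = Phi ((P12 z + P21 z + P22 z) + P11 z)" using P_decomp[of z] by (metis add.commute add.assoc)
  also have "\<dots> = Phi (P12 z + P21 z + P22 z) + Phi (P11 z)" by (rule L2a[OF a ev_P11])
  also have "Phi (P12 z + P21 z + P22 z) = Phi (P12 z + P21 z) + Phi (P22 z)"
  proof (rule L2b[OF _ ev_P22])
    show "P22 (P12 z + P21 z) = 0"
      using P22_ev[OF ev_P12[of z]] P22_ev[OF ev_P21[of z]] unfolding P22_def
      by (simp add: P11_add mul_lin algebra_simps)
  qed
  also have "Phi (P12 z + P21 z) = Phi (P12 z) + Phi (P21 z)" by (rule L3[OF ev_P12 ev_P21])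
  finally show ?thesis by (simp add: algebra_simps)
qed

lemma DecK:
  assumes "ev w11 1 1" "ev w12 1 0" "ev w21 0 1" "ev w22 0 0"
  shows "Phi (w11 + w12 + w21 + w22) = Phi w11 + Phi w12 + Phi w21 + Phi w22"
  using Dec[of "w11 + w12 + w21 + w22"] P_comp[OF assms refl] by simp


lemma PA_add_left: "PA (x + y) w = PA x w + PA y w"
  unfolding PA_def by (simp add: mul_lin star_add scaleC_add_right algebra_simps)
lemma PA_add_right: "PA w (x + y) = PA w x + PA w y"
  unfolding PA_def by (simp add: mul_lin scaleC_add_right algebra_simps)


lemma A12_add: assumes a: "ev a 1 0" and b: "ev b 1 0" shows "Phi (a + b) = Phi a + Phi b"
proof -
  define sa where "sa = star a"
  have sa: "ev sa 0 1" unfolding sa_def by (rule ev_star[OF a])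
  have ab: "ev (mul a b) 0 1" by (rule m12_12[OF a b])
  have ba: "ev (mul b sa) 1 1" by (rule m12_21[OF b sa])
  have ae: "mul a e = 0" "mul e a = a" using a unfolding ev_def by auto
  have be: "mul b e = 0" "mul e b = b" using b unfolding ev_def by auto
  have esa: "mul e sa = 0" using sa unfolding ev_def by simp
  have PAaf: "PA a f = a + sg *\<^sub>C sa"
    unfolding PA_def sa_def[symmetric] using ae esa by (simp add: f_left f_right)
  have PAab: "PA a b = mul a b + sg *\<^sub>C mul b sa" unfolding PA_def sa_def ..
  have PAef: "PA e f = 0" unfolding PA_def by (simp add: f_left f_right)
  have PAeb: "PA e b = b" unfolding PA_def using be by simp
  have Pfb: "Phi (f + b) = Phi f + Phi b"
    using DecK[OF ev_zero b ev_zero ev_f] by (simp add: add.commute)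
  have Pea: "Phi (e + a) = Phi e + Phi a"
    using DecK[of e a 0 0] ev_zero a unfolding ev_def by simp
  have D1: "Phi (PA a f) = Phi a + Phi (sg *\<^sub>C sa)"
    unfolding PAaf using DecK[OF ev_zero a ev_scaleC[OF sa] ev_zero] by simp
  have D2: "Phi (PA a b) = Phi (mul a b) + Phi (sg *\<^sub>C mul b sa)"
    unfolding PAab using DecK[OF ev_scaleC[OF ba] ev_zero ab ev_zero] by (simp add: add.commute)
  have ev21: "ev (sg *\<^sub>C sa + mul a b) 0 1" by (rule ev_add[OF ev_scaleC[OF sa] ab])
  have D3: "Phi (PA a (f + b)) = Phi (sg *\<^sub>C mul b sa) + Phi a + Phi (sg *\<^sub>C sa + mul a b)"
  proof -
    have "PA a (f + b) = sg *\<^sub>C mul b sa + a + (sg *\<^sub>C sa + mul a b) + 0"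
      unfolding PA_add_right PAaf PAab by (simp add: algebra_simps)
    then show ?thesis using DecK[OF ev_scaleC[OF ba] a ev21 ev_zero] by simp
  qed
  have E1: "Phi (PA a (f + b)) = Phi (PA a f) + Phi (PA a b)"
    unfolding presPA Pfb by (simp add: PB_add_right)
  have key: "Phi (sg *\<^sub>C sa + mul a b) = Phi (sg *\<^sub>C sa) + Phi (mul a b)"
    using E1 unfolding D1 D2 D3 by (simp add: algebra_simps)
  have D4: "Phi (PA (e + a) (f + b)) = Phi (sg *\<^sub>C mul b sa) + Phi (a + b) + Phi (sg *\<^sub>C sa + mul a b)"
  proof -
    have "PA (e + a) (f + b) = sg *\<^sub>C mul b sa + (a + b) + (sg *\<^sub>C sa + mul a b) + 0"
      unfolding PA_add_right PA_add_left PAaf PAab PAef PAeb by (simp add: algebra_simps)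
    then show ?thesis using DecK[OF ev_scaleC[OF ba] ev_add[OF a b] ev21 ev_zero] by simp
  qed
  have E2: "Phi (PA (e + a) (f + b)) = Phi (PA e f) + Phi (PA e b) + Phi (PA a f) + Phi (PA a b)"
    unfolding presPA Pfb Pea by (simp add: PB_add_right PB_add_left)
  show ?thesis using E2 unfolding D4 D1 D2 key PAef PAeb by (simp add: algebra_simps)
qed

lemma A11_add: assumes pr: "prime_algebra mul" and a: "ev a 1 1" and b: "ev b 1 1"
  shows "Phi (a + b) = Phi a + Phi b"
proof -
  obtain t where t: "Phi t = Phi a + Phi b" using surj_Phi by blast
  have Vfa: "V f a = 0" using V_e_ev[OF a] by (simp add: V_f scaleR_2)
  have Vfb: "V f b = 0" using V_e_ev[OF b] by (simp add: V_f scaleR_2)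
  have 1: "V f (t - a - b) = 0" by (rule testD[OF t f_star]) (simp add: Vfa Vfb)
  then have "V f t = 0" unfolding V_lin Vfa Vfb by simp
  then have "(t + t) - V e t = 0" by (simp add: V_f)
  then have "t + t = mul e t + mul t e" by (metis V_def eq_iff_diff_eq_0)
  then have tev: "ev t 1 1" by (rule A11_char)
  have PAc: "PA z c = mul z c" if "ev z 1 1" "ev c 1 0" for z c
    unfolding PA_def using m12_11[OF that(2) ev_star[OF that(1)]] by simp
  have "mul (t - a - b) c = 0" if c: "ev c 1 0" for c
  proof -
    have "Phi (mul t c) = Phi (mul a c) + Phi (mul b c)"
      using transfer(2)[OF t, of c] PAc[OF tev c] PAc[OF a c] PAc[OF b c] by simp
    also have "\<dots> = Phi (mul a c + mul b c)" by (rule A12_add[symmetric, OF m11_12[OF a c] m11_12[OF b c]])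
    finally have "mul t c = mul a c + mul b c" by (rule inj_Phi)
    then show ?thesis by (simp add: mul_lin)
  qed
  then have "t - a - b = 0"
    using prime_lemma[OF pr] ev_diff[OF ev_diff[OF tev a] b] by blast
  then show ?thesis using t by (simp add: algebra_simps)
qed


lemma peirce_add: assumes pr: "prime_algebra mul" and x: "x \<in> peirce mul e e" and y: "y \<in> peirce mul e e"
  shows "Phi (x + y) = Phi x + Phi y"
proof -
  have "ev x 1 1" using x ev_P11 unfolding peirce_def P11_def by auto
  moreover have "ev y 1 1" using y ev_P11 unfolding peirce_def P11_def by auto
  ultimately show ?thesis by (rule A11_add[OF pr])
qed

end

lemma sg_exists:
  fixes mulA :: "'a::complex_vector \<Rightarrow> 'a \<Rightarrow> 'a" and mulB :: "'b::complex_vector \<Rightarrow> 'b \<Rightarrow> 'b"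
  assumes "preserves_plus mulA starA mulB starB Phi \<or> preserves_minus mulA starA mulB starB Phi"
  shows "\<exists>sg. (sg = 1 \<or> sg = -1) \<and> (\<forall>x y. Phi (mulA x y + sg *\<^sub>C mulA y (starA x))
                 = mulB (Phi x) (Phi y) + sg *\<^sub>C mulB (Phi y) (starB (Phi x)))"
  using assms
proof
  assume "preserves_plus mulA starA mulB starB Phi"
  then show ?thesis unfolding preserves_plus_def by (intro exI[of _ 1]) (simp add: scaleC_one)
next
  assume "preserves_minus mulA starA mulB starB Phi"
  then show ?thesis unfolding preserves_minus_def by (intro exI[of _ "-1"]) simp
qed

theorem claim2p7:
  fixes mulA :: "'a::{complex_normed_vector,banach} \<Rightarrow> 'a \<Rightarrow> 'a"
    and starA :: "'a \<Rightarrow> 'a"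
    and mulB :: "'b::complex_vector \<Rightarrow> 'b \<Rightarrow> 'b"
    and starB :: "'b \<Rightarrow> 'b"
    and \<Phi> :: "'a \<Rightarrow> 'b"
    and one :: 'a and p1 p2 :: 'a
  assumes "alt_W_star_factor mulA starA"
    and "alt_star_algebra mulB starB"
    and "bij \<Phi>"
    and "preserves_plus mulA starA mulB starB \<Phi> \<or> preserves_minus mulA starA mulB starB \<Phi>"
    and "is_unit mulA one"
    and "projection mulA starA p1" and "p1 \<noteq> one"
    and "p2 = one - p1"
  shows "(\<forall>a11\<in>peirce mulA p1 p1. \<forall>b11\<in>peirce mulA p1 p1.
            \<Phi> (a11 + b11) = \<Phi> a11 + \<Phi> b11) \<and>
         (\<forall>c22\<in>peirce mulA p2 p2. \<forall>d22\<in>peirce mulA p2 p2.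
            \<Phi> (c22 + d22) = \<Phi> c22 + \<Phi> d22)"
proof -
  have AA: "alt_star_algebra mulA starA" and pr: "prime_algebra mulA"
    using assms(1) unfolding alt_W_star_factor_def alt_C_star_algebra_def by auto
  obtain sg where sg: "sg = 1 \<or> sg = -1"
    and pres: "\<forall>x y. \<Phi> (mulA x y + sg *\<^sub>C mulA y (starA x))
                 = mulB (\<Phi> x) (\<Phi> y) + sg *\<^sub>C mulB (\<Phi> y) (starB (\<Phi> x))"
    using sg_exists[OF assms(4)] by blast
  interpret P1: presv mulA starA one p1 mulB starB \<Phi> sg
    using AA assms(2,3,5,6,7) sg pres by unfold_locales auto
  have proj2: "projection mulA starA p2"
    unfolding projection_def assms(8)
  proof (intro conjI)
    show "one - p1 \<noteq> 0" using assms(7) by simp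
    show "starA (one - p1) = one - p1" by (simp add: P1.star_diff)
    show "mulA (one - p1) (one - p1) = one - p1" by (simp add: P1.mul_lin)
  qed
  have p2ne: "p2 \<noteq> one" using assms(6,8) unfolding projection_def by auto
  interpret P2: presv mulA starA one p2 mulB starB \<Phi> sg
    using AA assms(2,3,5) proj2 p2ne sg pres by unfold_locales auto
  show ?thesis using P1.peirce_add[OF pr] P2.peirce_add[OF pr] by blast
qed

end
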